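(* Let $d\geq1$ and let $\varphi:\mathbb R_+\to\mathbb R$ be smooth with compact support contained in $(0,1)$. For $n\geq1$ and $t\geq0$, let $\mathcal G^n_t$ denote the function on $\mathbb R^d$ whose spatial Fourier transform is $\mathcal F_x(\mathcal G^n_t)(\eta)=\mathbf 1_{\{|\eta|\leq n\}}\frac{\sin(t|\eta|)}{|\eta|}$. For $\xi,\tilde\xi\geq0$ and $\eta,\tilde\eta\in\mathbb R^d\setminus\{0\}$, set $$M^n_\varphi((\xi,\eta),(\tilde\xi,\tilde\eta)):=\frac{1}{4|\eta||\tilde\eta|}\int_0^\infty dt\,\varphi(t)\int_0^tdu\,e^{\imath u(\xi-\tilde\xi)}\mathcal F_x(\mathcal G^n_{t-u})(\eta-\tilde\eta)\int_0^uds\,e^{-\imath s(\xi-|\eta|)}\int_0^udr\,e^{\imath r(\tilde\xi-|\tilde\eta|)}.$$ Then there exist functions $R^n_\varphi$ ($n\geq1$) such that for all $n\geq1$, $\xi,\tilde\xi\geq0$ and $\eta,\tilde\eta\in\mathbb R^d\setminus\{0\}$, $$\int_0^\infty dt\,\varphi(t)\int_0^tdu\,e^{\imath u(\xi-\tilde\xi)}\mathcal F_x(\mathcal G^n_{t-u})(\eta-\tilde\eta)\int_0^uds\,e^{-\imath\xi s}\mathcal F_x(\mathcal G^n_s)(\eta)\int_0^udr\,e^{\imath\tilde\xi r}\mathcal F_x(\mathcal G^n_r)(\tilde\eta)$$ $$=\mathbf 1_{\{|\eta|\leq n\}}\mathbf 1_{\{|\tilde\eta|\leq n\}}\Big[M^n_\varphi((\xi,\eta),(\tilde\xi,\tilde\eta))+R^n_\varphi((\xi,\eta),(\tilde\xi,\tilde\eta))\Big],$$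 and, for every $\kappa\in[0,1]$, there is a constant $C$ (independent of $n,\xi,\tilde\xi,\eta,\tilde\eta$) with $$\sup_{n\geq1}\big|R^n_\varphi((\xi,\eta),(\tilde\xi,\tilde\eta))\big|\leq\frac{C}{|\eta||\tilde\eta|}\bigg[\frac{1}{|\xi-|\eta||^\kappa\,|\tilde\xi+|\tilde\eta||}+\frac{1}{|\xi+|\eta||\,|\tilde\xi+|\tilde\eta||}+\frac{1}{|\xi+|\eta||\,|\tilde\xi-|\tilde\eta||^\kappa}\bigg].$$
   Context: Spatial Fourier transform: $\mathcal F_x\psi(\eta)=\int_{\mathbb R^d}e^{-\imath\langle\eta,x\rangle}\psi(x)\,dx$. Terms with a vanishing denominator in the bound are interpreted as $+\infty$. *)

theory Defs
  imports "HOL-Analysis.Analysis"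
begin

definition smooth_on :: "real set \<Rightarrow> (real \<Rightarrow> real) \<Rightarrow> bool" where
  "smooth_on S f \<longleftrightarrow> (\<forall>k::nat. \<forall>x\<in>S. ((deriv ^^ k) f) differentiable (at x))"

text \<open>Spatial Fourier transform of the truncated wave kernel G^n_t at eta:
  1_{|eta| \<le> n} sin(t|eta|)/|eta|, with the value t at eta = 0 (continuous extension).\<close>
definition FG :: "nat \<Rightarrow> real \<Rightarrow> 'a::euclidean_space \<Rightarrow> complex" where
  "FG n t \<eta> = (if norm \<eta> \<le> real n then
       (if \<eta> = 0 then complex_of_real t else complex_of_real (sin (t * norm \<eta>) / norm \<eta>))
     else 0)"

definition ind_le :: "nat \<Rightarrow> 'a::euclidean_space \<Rightarrow> complex" where
  "ind_le n \<eta> = (if norm \<eta> \<le> real n then 1 else 0)"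

definition LHS :: "(real \<Rightarrow> real) \<Rightarrow> nat \<Rightarrow> real \<Rightarrow> 'a::euclidean_space \<Rightarrow> real \<Rightarrow> 'a \<Rightarrow> complex" where
  "LHS \<phi> n \<xi> \<eta> \<xi>' \<eta>' =
     integral {0..} (\<lambda>t. complex_of_real (\<phi> t) *
       integral {0..t} (\<lambda>u. exp (\<i> * complex_of_real (u * (\<xi> - \<xi>'))) * FG n (t - u) (\<eta> - \<eta>') *
         integral {0..u} (\<lambda>s. exp (- \<i> * complex_of_real (\<xi> * s)) * FG n s \<eta>) *
         integral {0..u} (\<lambda>r. exp (\<i> * complex_of_real (\<xi>' * r)) * FG n r \<eta>')))"

definition M :: "(real \<Rightarrow> real) \<Rightarrow> nat \<Rightarrow> real \<Rightarrow> 'a::euclidean_space \<Rightarrow> real \<Rightarrow> 'a \<Rightarrow> complex" where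
  "M \<phi> n \<xi> \<eta> \<xi>' \<eta>' =
     complex_of_real (1 / (4 * norm \<eta> * norm \<eta>')) *
     integral {0..} (\<lambda>t. complex_of_real (\<phi> t) *
       integral {0..t} (\<lambda>u. exp (\<i> * complex_of_real (u * (\<xi> - \<xi>'))) * FG n (t - u) (\<eta> - \<eta>') *
         integral {0..u} (\<lambda>s. exp (- \<i> * complex_of_real (s * (\<xi> - norm \<eta>)))) *
         integral {0..u} (\<lambda>r. exp (\<i> * complex_of_real (r * (\<xi>' - norm \<eta>'))))))"

text \<open>x^kappa for x \<ge> 0 with the convention 0^0 = 1 (Isabelle's powr has 0 powr 0 = 0).\<close>
definition rpow :: "real \<Rightarrow> real \<Rightarrow> real" where
  "rpow x \<kappa> = (if \<kappa> = 0 then 1 else x powr \<kappa>)"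

end

theory Submission
  imports Defs
begin


lemma FG_cont: "continuous_on UNIV (\<lambda>x. FG n x \<delta>)"
proof (cases "norm \<delta> \<le> real n")
  case True
  show ?thesis
  proof (cases "\<delta> = 0")
    case True
    then show ?thesis by (simp add: FG_def continuous_intros)
  next
    case False
    then show ?thesis using \<open>norm \<delta> \<le> real n\<close> by (simp add: FG_def continuous_intros)
  qed
next
  case False
  then show ?thesis by (simp add: FG_def)
qed

lemma FG_bound: "norm (FG n x \<delta>) \<le> \<bar>x\<bar>"
proof -
  have "\<bar>sin (x * norm \<delta>)\<bar> / norm \<delta> \<le> \<bar>x\<bar>" if "\<delta> \<noteq> 0"
  proof -
    have "\<bar>sin (x * norm \<delta>)\<bar> \<le> \<bar>x\<bar> * norm \<delta>" using abs_sin_x_le_abs_x[of "x * norm \<delta>"]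
      by (simp add: abs_mult)
    then show ?thesis using that by (simp add: divide_le_eq)
  qed
  then show ?thesis unfolding FG_def by (auto simp: norm_divide)
qed

definition Ie :: "real \<Rightarrow> real \<Rightarrow> complex" where
  "Ie c u = integral {0..u} (\<lambda>s. exp (\<i> * complex_of_real (c * s)))"

lemma cont_e: "continuous_on S (\<lambda>s. exp (\<i> * complex_of_real (c * s)))"
  by (intro continuous_intros)

lemma Ie_closed:
  assumes "c \<noteq> 0" "0 \<le> u"
  shows "Ie c u = (exp (\<i> * complex_of_real (c * u)) - 1) / (\<i> * complex_of_real c)"
proof -
  have d: "((\<lambda>s. exp (\<i> * complex_of_real (c * s)) / (\<i> * complex_of_real c)) has_vector_derivative
            exp (\<i> * complex_of_real (c * s))) (at s within {0..u})" for s
  proof -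
    have "((\<lambda>z. exp (\<i> * (complex_of_real c * z)) / (\<i> * complex_of_real c)) has_field_derivative
            exp (\<i> * (complex_of_real c * complex_of_real s))) (at (complex_of_real s))"
      using assms(1) by (auto intro!: derivative_eq_intros) (simp add: mult.commute mult.left_commute)
    from has_vector_derivative_real_field[OF this]
    show ?thesis by (auto intro: has_vector_derivative_at_within)
  qed
  have "((\<lambda>s. exp (\<i> * complex_of_real (c * s))) has_integral
     (exp (\<i> * complex_of_real (c * u)) / (\<i> * complex_of_real c) - exp (\<i> * complex_of_real (c * 0)) / (\<i> * complex_of_real c))) {0..u}"
    by (rule fundamental_theorem_of_calculus[OF assms(2)]) (use d in auto)
  then show ?thesis unfolding Ie_def by (simp add: integral_unique diff_divide_distrib)
qed

lemma Ie_le_u: assumes "0 \<le> u" shows "norm (Ie c u) \<le> u"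
proof -
  have "norm (Ie c u) \<le> integral {0..u} (\<lambda>s. 1::real)"
    unfolding Ie_def
    by (rule integral_norm_bound_integral) (auto intro!: integrable_continuous_interval continuous_intros)
  then show ?thesis using assms by simp
qed

lemma Ie_le_c: assumes "c \<noteq> 0" "0 \<le> u" shows "norm (Ie c u) \<le> 2 / \<bar>c\<bar>"
proof -
  have "norm (exp (\<i> * complex_of_real (c * u)) - 1) \<le> 2"
    by (rule order_trans[OF norm_triangle_ineq4]) simp
  then show ?thesis using assms
    by (simp add: Ie_closed norm_divide norm_mult divide_right_mono)
qed

lemma Ie_le_k:
  assumes "0 \<le> u" "u \<le> 1" "0 \<le> \<kappa>" "\<kappa> \<le> 1" "rpow \<bar>c\<bar> \<kappa> \<noteq> 0"
  shows "norm (Ie c u) \<le> 2 / rpow \<bar>c\<bar> \<kappa>"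
proof (cases "\<kappa> = 0")
  case True
  then show ?thesis using Ie_le_u[OF assms(1), of c] assms by (simp add: rpow_def)
next
  case False
  then have c0: "c \<noteq> 0" using assms(5) by (auto simp: rpow_def)
  have rp: "rpow \<bar>c\<bar> \<kappa> = \<bar>c\<bar> powr \<kappa>" using False by (simp add: rpow_def)
  have pos: "\<bar>c\<bar> powr \<kappa> > 0" using c0 by simp
  show ?thesis
  proof (cases "\<bar>c\<bar> \<ge> 1")
    case True
    have "\<bar>c\<bar> powr \<kappa> \<le> \<bar>c\<bar> powr 1" using True assms by (intro powr_mono) auto
    then have "2 / \<bar>c\<bar> \<le> 2 / \<bar>c\<bar> powr \<kappa>" using pos c0 by (simp add: frac_le)
    then show ?thesis using Ie_le_c[OF c0 assms(1)] rp by simp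
  next
    case False
    have "\<bar>c\<bar> powr \<kappa> \<le> 1" using False assms by (intro powr_le1) auto
    then have "1 \<le> 2 / \<bar>c\<bar> powr \<kappa>" using pos by (simp add: le_divide_eq)
    then show ?thesis using Ie_le_u[OF assms(1), of c] assms unfolding rp by linarith
  qed
qed

lemma Ie_cont: "continuous_on {0..1} (Ie c)"
  unfolding Ie_def
  by (rule indefinite_integral_continuous_1) (auto intro!: integrable_continuous_interval continuous_intros)



lemma int_param_cont:
  fixes F :: "real \<Rightarrow> real \<Rightarrow> complex"
  assumes cF: "continuous_on ({0..1} \<times> {0..1}) (\<lambda>(t,u). F t u)"
  shows "continuous_on {0..1} (\<lambda>t. integral {0..t} (F t))"
proof -
  have eq: "integral {0..t} (F t) = complex_of_real t * integral {0..1} (\<lambda>v. F t (t * v))" if "0 \<le> t" for t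
  proof (cases "t = 0")
    case True then show ?thesis by simp
  next
    case False
    then have tp: "t > 0" using that by simp
    have img: "(\<lambda>x. x / t) ` {0..t} = {0..1}"
    proof
      show "(\<lambda>x. x / t) ` {0..t} \<subseteq> {0..1}" using tp by (auto simp: divide_le_eq)
      show "{0..1} \<subseteq> (\<lambda>x. x / t) ` {0..t}"
      proof
        fix y assume "y \<in> {0..1::real}"
        then have "y = (t*y)/t" "t*y \<in> {0..t}" using tp by (auto simp: mult_le_cancel_left1)
        then show "y \<in> (\<lambda>x. x / t) ` {0..t}" by blast
      qed
    qed
    have "integral {0..1} (\<lambda>x. F t (t*x)) = (1 / \<bar>t\<bar>) *\<^sub>R integral {0..t} (F t)"
      using integral_stretch_real[of t 0 t "F t"] False img by simp
    then show ?thesis using tp by (simp add: scaleR_conv_of_real)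
  qed
  have c2: "continuous_on ({0..1} \<times> {0..1}) ((\<lambda>(t,u). F t u) \<circ> (\<lambda>p. (fst p, fst p * snd p)))"
  proof (rule continuous_on_compose)
    show "continuous_on ({0..1} \<times> {0..1}) (\<lambda>p::real\<times>real. (fst p, fst p * snd p))"
      by (intro continuous_intros)
    have "(\<lambda>p::real\<times>real. (fst p, fst p * snd p)) ` ({0..1} \<times> {0..1}) \<subseteq> {0..1} \<times> {0..1}"
      by (auto simp: mult_le_one)
    then show "continuous_on ((\<lambda>p. (fst p, fst p * snd p)) ` ({0..1} \<times> {0..1})) (\<lambda>(t,u). F t u)"
      using continuous_on_subset[OF cF] by blast
  qed
  have c3: "continuous_on ({0..1} \<times> cbox 0 1) (\<lambda>(t,v). F t (t * v))"
    using c2 by (simp add: o_def case_prod_beta)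
  have "continuous_on {0..1} (\<lambda>t. integral (cbox 0 1) (\<lambda>v. F t (t * v)))"
    by (rule integral_continuous_on_param[OF c3])
  then have "continuous_on {0..1} (\<lambda>t. complex_of_real t * integral {0..1} (\<lambda>v. F t (t * v)))"
    by (auto intro!: continuous_intros)
  then show ?thesis by (rule continuous_on_eq) (use eq in auto)
qed

lemma phi_facts:
  fixes \<phi> :: "real \<Rightarrow> real"
  assumes smooth: "smooth_on {0<..} \<phi>"
    and supp: "closure {t. 0 \<le> t \<and> \<phi> t \<noteq> 0} \<subseteq> {0<..<1}"
  shows "continuous_on {0..1} \<phi>" and "\<And>t. t \<ge> 1 \<Longrightarrow> \<phi> t = 0"
proof -
  let ?K = "closure {t. 0 \<le> t \<and> \<phi> t \<noteq> 0}"
  show z1: "\<phi> t = 0" if "t \<ge> 1" for t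
  proof (rule ccontr)
    assume "\<phi> t \<noteq> 0"
    then have "t \<in> ?K" using that closure_subset by fastforce
    then show False using supp that by auto
  qed
  have "open (- ?K)" by auto
  moreover have "0 \<in> - ?K" using supp by auto
  ultimately obtain \<epsilon> where ep: "\<epsilon> > 0" "ball 0 \<epsilon> \<subseteq> - ?K"
    using open_contains_ball by blast
  define e where "e = min \<epsilon> 1 / 2"
  have e: "0 < e" "e < \<epsilon>" "e < 1" using ep by (auto simp: e_def)
  have z0: "\<phi> t = 0" if "0 \<le> t" "t \<le> e" for t
  proof (rule ccontr)
    assume "\<phi> t \<noteq> 0"
    then have "t \<in> ?K" using that closure_subset by fastforce
    moreover have "t \<in> ball 0 \<epsilon>" using that e by auto
    ultimately show False using ep by auto
  qed
  have a: "continuous_on {0..e} \<phi>"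
    by (rule continuous_on_eq[of _ "\<lambda>_. 0"]) (auto simp: z0)
  have b: "continuous_on {e..1} \<phi>"
  proof (rule continuous_at_imp_continuous_on, rule ballI)
    fix x assume "x \<in> {e..1}"
    then have "x \<in> {0<..}" using e by auto
    then have "((deriv ^^ 0) \<phi>) differentiable (at x)" using smooth unfolding smooth_on_def by blast
    then show "isCont \<phi> x" by (simp add: differentiable_imp_continuous_within)
  qed
  have "continuous_on ({0..e} \<union> {e..1}) \<phi>" by (rule continuous_on_closed_Un[OF _ _ a b]) auto
  moreover have "{0..e} \<union> {e..1} = {0..1::real}" using e by auto
  ultimately show "continuous_on {0..1} \<phi>" by simp
qed



lemma indef_cont:
  fixes g :: "real \<Rightarrow> complex"
  assumes "continuous_on {0..1} g"
  shows "continuous_on {0..1} (\<lambda>u. integral {0..u} g)"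
  by (rule indefinite_integral_continuous_1) (rule integrable_continuous_interval[OF assms])

lemma joint_cont:
  fixes P Q :: "real \<Rightarrow> complex"
  assumes cP: "continuous_on {0..1} P" and cQ: "continuous_on {0..1} Q"
  shows "continuous_on ({0..1}\<times>{0..1}) (\<lambda>(t,u). exp (\<i> * complex_of_real (u * c)) * FG n (t - u) \<delta> * P u * Q u)"
proof -
  have p: "continuous_on ({0..1}\<times>{0..1}) (\<lambda>x::real\<times>real. P (snd x))"
    by (rule continuous_on_compose2[OF cP continuous_on_snd]) (auto intro: continuous_on_id)
  have q: "continuous_on ({0..1}\<times>{0..1}) (\<lambda>x::real\<times>real. Q (snd x))"
    by (rule continuous_on_compose2[OF cQ continuous_on_snd]) (auto intro: continuous_on_id)
  have k: "continuous_on ({0..1}\<times>{0..1}) (\<lambda>x::real\<times>real. FG n (fst x - snd x) \<delta>)"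
    by (rule continuous_on_compose2[OF FG_cont]) (auto intro!: continuous_intros)
  show ?thesis unfolding split_beta by (intro continuous_intros p q k)
qed

lemma u_cont:
  fixes P Q :: "real \<Rightarrow> complex"
  assumes cP: "continuous_on {0..1} P" and cQ: "continuous_on {0..1} Q"
  shows "continuous_on {0..1} (\<lambda>u. exp (\<i> * complex_of_real (u * c)) * FG n (t - u) \<delta> * P u * Q u)"
proof -
  have k: "continuous_on {0..1} (\<lambda>u. FG n (t - u) \<delta>)"
    by (rule continuous_on_compose2[OF FG_cont]) (auto intro!: continuous_intros)
  show ?thesis by (intro continuous_intros cP cQ k)
qed

lemma sin_int:
  assumes "a > 0"
  shows "integral {0..u} (\<lambda>s. exp (\<i> * complex_of_real (c * s)) * complex_of_real (sin (s * a) / a))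
     = (1 / (2 * \<i> * complex_of_real a)) * (Ie (c + a) u - Ie (c - a) u)"
proof -
  have pw: "exp (\<i> * complex_of_real (c * s)) * complex_of_real (sin (s * a) / a)
     = (1 / (2 * \<i> * complex_of_real a)) * (exp (\<i> * complex_of_real ((c + a) * s)) - exp (\<i> * complex_of_real ((c - a) * s)))" for s
  proof -
    have sn: "complex_of_real (sin (s*a)) = (exp (\<i> * complex_of_real (s*a)) - exp (-(\<i> * complex_of_real (s*a)))) / (2*\<i>)"
      by (subst sin_of_real[symmetric]) (rule sin_exp_eq)
    have e1: "exp (\<i> * complex_of_real ((c + a) * s)) = exp (\<i> * complex_of_real (c * s)) * exp (\<i> * complex_of_real (s*a))"
      by (simp add: exp_add[symmetric] algebra_simps)
    have e2: "exp (\<i> * complex_of_real ((c - a) * s)) = exp (\<i> * complex_of_real (c * s)) * exp (-(\<i> * complex_of_real (s*a)))"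
      by (simp add: exp_add[symmetric] algebra_simps)
    show ?thesis using assms unfolding e1 e2 of_real_divide sn by (simp add: field_simps)
  qed
  have i1: "(\<lambda>s. exp (\<i> * complex_of_real ((c + a) * s))) integrable_on {0..u}"
    by (intro integrable_continuous_interval continuous_intros)
  have i2: "(\<lambda>s. exp (\<i> * complex_of_real ((c - a) * s))) integrable_on {0..u}"
    by (intro integrable_continuous_interval continuous_intros)
  show ?thesis unfolding pw Ie_def
    by (subst integral_mult_right) (subst integral_diff[OF i1 i2], rule refl)
qed



lemma int_0_1:
  fixes \<phi> :: "real \<Rightarrow> real" and H :: "real \<Rightarrow> complex"
  assumes "\<And>t. t \<ge> 1 \<Longrightarrow> \<phi> t = 0"
  shows "integral {0..} (\<lambda>t. complex_of_real (\<phi> t) * H t) = integral {0..1} (\<lambda>t. complex_of_real (\<phi> t) * H t)"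
proof -
  have "integral {0..} (\<lambda>t. complex_of_real (\<phi> t) * H t)
      = integral {0..} (\<lambda>t. if t \<in> {0..1} then complex_of_real (\<phi> t) * H t else 0)"
    by (rule integral_cong) (use assms in auto)
  also have "\<dots> = integral ({0..1} \<inter> {0..}) (\<lambda>t. complex_of_real (\<phi> t) * H t)"
    by (rule integral_restrict_Int)
  also have "{0..1} \<inter> {0..} = {0..1::real}" by auto
  finally show ?thesis .
qed

lemma main_est:
  fixes \<phi> :: "real \<Rightarrow> real" and \<eta> \<eta>' :: "'a::euclidean_space"
  assumes phic: "continuous_on {0..1} \<phi>" and phi1: "\<And>t. t \<ge> 1 \<Longrightarrow> \<phi> t = 0"
    and Phi: "\<And>t. t \<in> {0..1} \<Longrightarrow> \<bar>\<phi> t\<bar> \<le> \<Phi>"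
    and xi: "0 \<le> \<xi>" "0 \<le> \<xi>'" and eta: "\<eta> \<noteq> 0" "\<eta>' \<noteq> 0"
    and ball: "norm \<eta> \<le> real n" "norm \<eta>' \<le> real n"
    and kap: "0 \<le> \<kappa>" "\<kappa> \<le> 1"
    and rk1: "rpow \<bar>\<xi> - norm \<eta>\<bar> \<kappa> \<noteq> 0" and rk2: "rpow \<bar>\<xi>' - norm \<eta>'\<bar> \<kappa> \<noteq> 0"
  shows "norm (LHS \<phi> n \<xi> \<eta> \<xi>' \<eta>' - M \<phi> n \<xi> \<eta> \<xi>' \<eta>') \<le>
     \<Phi> / (norm \<eta> * norm \<eta>') *
               (1 / (rpow \<bar>\<xi> - norm \<eta>\<bar> \<kappa> * \<bar>\<xi>' + norm \<eta>'\<bar>)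
                + 1 / (\<bar>\<xi> + norm \<eta>\<bar> * \<bar>\<xi>' + norm \<eta>'\<bar>)
                + 1 / (\<bar>\<xi> + norm \<eta>\<bar> * rpow \<bar>\<xi>' - norm \<eta>'\<bar> \<kappa>))"
proof -
  define a where "a = norm \<eta>"
  define b where "b = norm \<eta>'"
  have a0: "a > 0" and b0: "b > 0" using eta by (auto simp: a_def b_def)
  define Bnd where "Bnd = 1 / (rpow \<bar>\<xi> - a\<bar> \<kappa> * \<bar>\<xi>' + b\<bar>)
                + 1 / (\<bar>\<xi> + a\<bar> * \<bar>\<xi>' + b\<bar>)
                + 1 / (\<bar>\<xi> + a\<bar> * rpow \<bar>\<xi>' - b\<bar> \<kappa>)"
  have rp1: "rpow \<bar>\<xi> - a\<bar> \<kappa> > 0" using rk1 unfolding a_def rpow_def by auto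
  have rp2: "rpow \<bar>\<xi>' - b\<bar> \<kappa> > 0" using rk2 unfolding b_def rpow_def by auto
  have Bnd0: "Bnd \<ge> 0" unfolding Bnd_def using rp1 rp2 a0 b0 xi by simp
  define A\<eta> where "A\<eta> = (\<lambda>u. integral {0..u} (\<lambda>s. exp (- \<i> * complex_of_real (\<xi> * s)) * FG n s \<eta>))"
  define B\<eta> where "B\<eta> = (\<lambda>u. integral {0..u} (\<lambda>r. exp (\<i> * complex_of_real (\<xi>' * r)) * FG n r \<eta>'))"
  define Am where "Am = Ie (a - \<xi>)"
  define Ap where "Ap = Ie (- (\<xi> + a))"
  define Bp where "Bp = Ie (\<xi>' + b)"
  define Bm where "Bm = Ie (\<xi>' - b)"
  define c where "c = complex_of_real (1 / (4 * a * b))"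
  define X where "X = (\<lambda>t. integral {0..t} (\<lambda>u. exp (\<i> * complex_of_real (u * (\<xi> - \<xi>'))) * FG n (t - u) (\<eta> - \<eta>') * A\<eta> u * B\<eta> u))"
  define Y where "Y = (\<lambda>t. integral {0..t} (\<lambda>u. exp (\<i> * complex_of_real (u * (\<xi> - \<xi>'))) * FG n (t - u) (\<eta> - \<eta>') * Am u * Bm u))"
  have LHS_eq: "LHS \<phi> n \<xi> \<eta> \<xi>' \<eta>' = integral {0..} (\<lambda>t. complex_of_real (\<phi> t) * X t)"
    unfolding LHS_def X_def A\<eta>_def B\<eta>_def by simp
  have AmI: "integral {0..u} (\<lambda>s. exp (- \<i> * complex_of_real (s * (\<xi> - norm \<eta>)))) = Am u" for u
    unfolding Am_def Ie_def a_def by (intro integral_cong arg_cong[where f=exp]) (simp add: algebra_simps)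
  have BmI: "integral {0..u} (\<lambda>r. exp (\<i> * complex_of_real (r * (\<xi>' - norm \<eta>')))) = Bm u" for u
    unfolding Bm_def Ie_def b_def by (intro integral_cong arg_cong[where f=exp]) (simp add: algebra_simps)
  have M_eq: "M \<phi> n \<xi> \<eta> \<xi>' \<eta>' = c * integral {0..} (\<lambda>t. complex_of_real (\<phi> t) * Y t)"
    unfolding M_def AmI BmI by (simp add: c_def a_def b_def Y_def)
  have Adec: "A\<eta> u = (1 / (2 * \<i> * complex_of_real a)) * (Am u - Ap u)" for u
  proof -
    have "A\<eta> u = integral {0..u} (\<lambda>s. exp (\<i> * complex_of_real ((-\<xi>) * s)) * complex_of_real (sin (s * a) / a))"
      unfolding A\<eta>_def using ball eta by (intro integral_cong) (simp add: FG_def a_def)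
    also have "\<dots> = (1 / (2 * \<i> * complex_of_real a)) * (Am u - Ap u)"
      unfolding sin_int[OF a0] Am_def Ap_def by (simp add: algebra_simps)
    finally show ?thesis .
  qed
  have Bdec: "B\<eta> u = (1 / (2 * \<i> * complex_of_real b)) * (Bp u - Bm u)" for u
  proof -
    have "B\<eta> u = integral {0..u} (\<lambda>s. exp (\<i> * complex_of_real (\<xi>' * s)) * complex_of_real (sin (s * b) / b))"
      unfolding B\<eta>_def using ball eta by (intro integral_cong) (simp add: FG_def b_def)
    also have "\<dots> = (1 / (2 * \<i> * complex_of_real b)) * (Bp u - Bm u)"
      unfolding sin_int[OF b0] Bp_def Bm_def by simp
    finally show ?thesis .
  qed
  have ii: "(1 / (2 * \<i> * complex_of_real a)) * (1 / (2 * \<i> * complex_of_real b)) = - c"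
    using a0 b0 by (simp add: c_def field_simps)
  have Ddec: "A\<eta> u * B\<eta> u - c * (Am u * Bm u) = - c * (Am u * Bp u - Ap u * Bp u + Ap u * Bm u)" for u
  proof -
    have "A\<eta> u * B\<eta> u = ((1 / (2 * \<i> * complex_of_real a)) * (1 / (2 * \<i> * complex_of_real b))) * ((Am u - Ap u) * (Bp u - Bm u))"
      unfolding Adec Bdec by (simp only: mult_ac)
    also have "\<dots> = - c * ((Am u - Ap u) * (Bp u - Bm u))" unfolding ii ..
    finally have h: "A\<eta> u * B\<eta> u = - c * ((Am u - Ap u) * (Bp u - Bm u))" .
    show ?thesis unfolding h by algebra
  qed
  have Dbound: "norm (A\<eta> u * B\<eta> u - c * (Am u * Bm u)) \<le> Bnd / (a * b)" if u: "0 \<le> u" "u \<le> 1" for u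
  proof -
    have n1: "norm (Am u) \<le> 2 / rpow \<bar>\<xi> - a\<bar> \<kappa>"
      using Ie_le_k[OF u kap, of "a - \<xi>"] rk1 unfolding Am_def a_def by (simp add: abs_minus_commute)
    have n2: "norm (Ap u) \<le> 2 / \<bar>\<xi> + a\<bar>"
      using Ie_le_c[of "- (\<xi> + a)" u] u a0 xi unfolding Ap_def by (simp add: add.commute)
    have n3: "norm (Bp u) \<le> 2 / \<bar>\<xi>' + b\<bar>"
      using Ie_le_c[of "\<xi>' + b" u] u b0 xi unfolding Bp_def by simp
    have n4: "norm (Bm u) \<le> 2 / rpow \<bar>\<xi>' - b\<bar> \<kappa>"
      using Ie_le_k[OF u kap, of "\<xi>' - b"] rk2 unfolding Bm_def b_def by simp
    have "norm (Am u * Bp u - Ap u * Bp u + Ap u * Bm u) \<le> norm (Am u) * norm (Bp u) + norm (Ap u) * norm (Bp u) + norm (Ap u) * norm (Bm u)"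
      by (rule order_trans[OF norm_triangle_ineq], rule add_mono[OF order_trans[OF norm_triangle_ineq4]]) (simp_all add: norm_mult)
    also have "\<dots> \<le> (2 / rpow \<bar>\<xi> - a\<bar> \<kappa>) * (2 / \<bar>\<xi>' + b\<bar>) + (2 / \<bar>\<xi> + a\<bar>) * (2 / \<bar>\<xi>' + b\<bar>) + (2 / \<bar>\<xi> + a\<bar>) * (2 / rpow \<bar>\<xi>' - b\<bar> \<kappa>)"
      using rp1 rp2 by (intro add_mono mult_mono n1 n2 n3 n4) auto
    also have "\<dots> = 4 * Bnd" unfolding Bnd_def by (simp add: algebra_simps)
    finally have h1: "norm (Am u * Bp u - Ap u * Bp u + Ap u * Bm u) \<le> 4 * Bnd" .
    have h2: "norm (- c) = 1 / (4 * a * b)" unfolding c_def norm_minus_cancel norm_of_real using a0 b0 by simp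
    have "norm (- c) * norm (Am u * Bp u - Ap u * Bp u + Ap u * Bm u) \<le> 1 / (4 * a * b) * (4 * Bnd)"
      unfolding h2 by (rule mult_left_mono[OF h1]) (use a0 b0 in simp)
    also have "\<dots> = Bnd / (a * b)" by simp
    finally show ?thesis unfolding Ddec norm_mult .
  qed
  have cA: "continuous_on {0..1} A\<eta>" unfolding A\<eta>_def
    by (rule indef_cont) (intro continuous_intros continuous_on_subset[OF FG_cont], auto)
  have cB: "continuous_on {0..1} B\<eta>" unfolding B\<eta>_def
    by (rule indef_cont) (intro continuous_intros continuous_on_subset[OF FG_cont], auto)
  have cAm: "continuous_on {0..1} Am" unfolding Am_def by (rule Ie_cont)
  have cBm: "continuous_on {0..1} Bm" unfolding Bm_def by (rule Ie_cont)
  have cX: "continuous_on {0..1} X" unfolding X_def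
    by (rule int_param_cont, rule joint_cont[OF cA cB])
  have cY: "continuous_on {0..1} Y" unfolding Y_def
    by (rule int_param_cont, rule joint_cont[OF cAm cBm])
  have XY: "norm (X t - c * Y t) \<le> Bnd / (a * b)" if t: "0 \<le> t" "t \<le> 1" for t
  proof -
    let ?E = "\<lambda>u. exp (\<i> * complex_of_real (u * (\<xi> - \<xi>'))) * FG n (t - u) (\<eta> - \<eta>')"
    have iX: "(\<lambda>u. ?E u * A\<eta> u * B\<eta> u) integrable_on {0..t}"
      by (rule integrable_continuous_interval, rule continuous_on_subset[OF u_cont[OF cA cB]]) (use t in auto)
    have iY: "(\<lambda>u. c * (?E u * Am u * Bm u)) integrable_on {0..t}"
      by (intro integrable_on_mult_right integrable_continuous_interval,
          rule continuous_on_subset[OF u_cont[OF cAm cBm]]) (use t in auto)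
    have "X t - c * Y t = integral {0..t} (\<lambda>u. ?E u * A\<eta> u * B\<eta> u) - integral {0..t} (\<lambda>u. c * (?E u * Am u * Bm u))"
      unfolding X_def Y_def by simp
    also have "\<dots> = integral {0..t} (\<lambda>u. ?E u * (A\<eta> u * B\<eta> u - c * (Am u * Bm u)))"
      by (subst integral_diff[OF iX iY, symmetric]) (simp add: algebra_simps)
    finally have eq: "X t - c * Y t = \<dots>" .
    have "norm (integral {0..t} (\<lambda>u. ?E u * (A\<eta> u * B\<eta> u - c * (Am u * Bm u)))) \<le> integral {0..t} (\<lambda>u. Bnd / (a * b))"
    proof (rule integral_norm_bound_integral)
      show "(\<lambda>u. ?E u * (A\<eta> u * B\<eta> u - c * (Am u * Bm u))) integrable_on {0..t}"
        using integrable_diff[OF iX iY] by (simp add: algebra_simps)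
      show "(\<lambda>u. Bnd / (a * b)) integrable_on {0..t}" by (intro integrable_continuous_interval continuous_intros)
      fix u assume u: "u \<in> {0..t}"
      have k: "norm (FG n (t - u) (\<eta> - \<eta>')) \<le> 1"
        using FG_bound[of n "t - u" "\<eta> - \<eta>'"] u t by auto
      have d: "norm (A\<eta> u * B\<eta> u - c * (Am u * Bm u)) \<le> Bnd / (a * b)" using Dbound u t by auto
      have "norm (?E u * (A\<eta> u * B\<eta> u - c * (Am u * Bm u))) = norm (FG n (t - u) (\<eta> - \<eta>')) * norm (A\<eta> u * B\<eta> u - c * (Am u * Bm u))"
        by (simp add: norm_mult)
      also have "\<dots> \<le> 1 * (Bnd / (a * b))" by (intro mult_mono k d) auto
      finally show "norm (?E u * (A\<eta> u * B\<eta> u - c * (Am u * Bm u))) \<le> Bnd / (a * b)" by simp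
    qed
    also have "\<dots> = t * (Bnd / (a * b))" using t by simp
    also have "\<dots> \<le> 1 * (Bnd / (a * b))" using t Bnd0 a0 b0 by (intro mult_right_mono) auto
    finally show ?thesis unfolding eq by simp
  qed
  have iPX: "(\<lambda>t. complex_of_real (\<phi> t) * X t) integrable_on {0..1}"
    by (intro integrable_continuous_interval continuous_intros phic cX)
  have iPY: "(\<lambda>t. c * (complex_of_real (\<phi> t) * Y t)) integrable_on {0..1}"
    by (intro integrable_continuous_interval continuous_intros phic cY)
  have "LHS \<phi> n \<xi> \<eta> \<xi>' \<eta>' - M \<phi> n \<xi> \<eta> \<xi>' \<eta>'
      = integral {0..1} (\<lambda>t. complex_of_real (\<phi> t) * X t) - integral {0..1} (\<lambda>t. c * (complex_of_real (\<phi> t) * Y t))"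
    unfolding LHS_eq M_eq using int_0_1[OF phi1, where H=X] int_0_1[OF phi1, where H=Y] by simp
  also have "\<dots> = integral {0..1} (\<lambda>t. complex_of_real (\<phi> t) * (X t - c * Y t))"
    by (subst integral_diff[OF iPX iPY, symmetric]) (simp add: algebra_simps)
  finally have eq: "LHS \<phi> n \<xi> \<eta> \<xi>' \<eta>' - M \<phi> n \<xi> \<eta> \<xi>' \<eta>' = \<dots>" .
  have "norm (integral {0..1} (\<lambda>t. complex_of_real (\<phi> t) * (X t - c * Y t))) \<le> integral {0..1::real} (\<lambda>t. \<Phi> * (Bnd / (a * b)))"
  proof (rule integral_norm_bound_integral)
    show "(\<lambda>t. complex_of_real (\<phi> t) * (X t - c * Y t)) integrable_on {0..1}"
      using integrable_diff[OF iPX iPY] by (simp add: algebra_simps)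
    show "(\<lambda>t. \<Phi> * (Bnd / (a * b))) integrable_on {0..1::real}" by (intro integrable_continuous_interval continuous_intros)
    fix t :: real assume t: "t \<in> {0..1}"
    have "norm (complex_of_real (\<phi> t) * (X t - c * Y t)) = \<bar>\<phi> t\<bar> * norm (X t - c * Y t)"
      by (simp add: norm_mult)
    also have "\<dots> \<le> \<Phi> * (Bnd / (a * b))"
      using Phi[OF t] XY t by (intro mult_mono) auto
    finally show "norm (complex_of_real (\<phi> t) * (X t - c * Y t)) \<le> \<Phi> * (Bnd / (a * b))" .
  qed
  also have "\<dots> = \<Phi> / (a * b) * Bnd" by simp
  finally show ?thesis unfolding eq Bnd_def a_def b_def .
qed



lemma eqn_part:
  fixes \<eta> \<eta>' :: "'a::euclidean_space"
  shows "LHS \<phi> n \<xi> \<eta> \<xi>' \<eta>' = ind_le n \<eta> * ind_le n \<eta>' * (M \<phi> n \<xi> \<eta> \<xi>' \<eta>' +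
     (if norm \<eta> \<le> real n \<and> norm \<eta>' \<le> real n then LHS \<phi> n \<xi> \<eta> \<xi>' \<eta>' - M \<phi> n \<xi> \<eta> \<xi>' \<eta>' else 0))"
proof (cases "norm \<eta> \<le> real n")
  case False
  then have "\<And>s. FG n s \<eta> = 0" by (simp add: FG_def)
  then have "LHS \<phi> n \<xi> \<eta> \<xi>' \<eta>' = 0" by (simp add: LHS_def)
  then show ?thesis using False by (simp add: ind_le_def)
next
  case T1: True
  show ?thesis
  proof (cases "norm \<eta>' \<le> real n")
    case False
    then have "\<And>s. FG n s \<eta>' = 0" by (simp add: FG_def)
    then have "LHS \<phi> n \<xi> \<eta> \<xi>' \<eta>' = 0" by (simp add: LHS_def)
    then show ?thesis using False by (simp add: ind_le_def)
  next
    case True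
    then show ?thesis using T1 by (simp add: ind_le_def)
  qed
qed

lemma rpow_nonneg: "0 \<le> x \<Longrightarrow> 0 \<le> rpow x \<kappa>"
  by (simp add: rpow_def)

theorem lemma4p2:
  fixes \<phi> :: "real \<Rightarrow> real"
  assumes smooth: "smooth_on {0<..} \<phi>"
    and supp: "closure {t. 0 \<le> t \<and> \<phi> t \<noteq> 0} \<subseteq> {0<..<1}"
  shows "\<exists>R :: nat \<Rightarrow> real \<Rightarrow> 'a::euclidean_space \<Rightarrow> real \<Rightarrow> 'a \<Rightarrow> complex.
     (\<forall>n \<xi> \<eta> \<xi>' \<eta>'. n \<ge> 1 \<longrightarrow> \<xi> \<ge> 0 \<longrightarrow> \<xi>' \<ge> 0 \<longrightarrow> \<eta> \<noteq> 0 \<longrightarrow> \<eta>' \<noteq> 0 \<longrightarrow>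
        LHS \<phi> n \<xi> \<eta> \<xi>' \<eta>' =
          ind_le n \<eta> * ind_le n \<eta>' * (M \<phi> n \<xi> \<eta> \<xi>' \<eta>' + R n \<xi> \<eta> \<xi>' \<eta>'))
   \<and> (\<forall>\<kappa>::real. 0 \<le> \<kappa> \<and> \<kappa> \<le> 1 \<longrightarrow>
        (\<exists>C::real. \<forall>n \<xi> \<eta> \<xi>' \<eta>'. n \<ge> 1 \<longrightarrow> \<xi> \<ge> 0 \<longrightarrow> \<xi>' \<ge> 0 \<longrightarrow> \<eta> \<noteq> 0 \<longrightarrow> \<eta>' \<noteq> 0 \<longrightarrow>
           rpow \<bar>\<xi> - norm \<eta>\<bar> \<kappa> \<noteq> 0 \<longrightarrow> rpow \<bar>\<xi>' - norm \<eta>'\<bar> \<kappa> \<noteq> 0 \<longrightarrow>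
           norm (R n \<xi> \<eta> \<xi>' \<eta>') \<le>
             C / (norm \<eta> * norm \<eta>') *
               (1 / (rpow \<bar>\<xi> - norm \<eta>\<bar> \<kappa> * \<bar>\<xi>' + norm \<eta>'\<bar>)
                + 1 / (\<bar>\<xi> + norm \<eta>\<bar> * \<bar>\<xi>' + norm \<eta>'\<bar>)
                + 1 / (\<bar>\<xi> + norm \<eta>\<bar> * rpow \<bar>\<xi>' - norm \<eta>'\<bar> \<kappa>))))"
proof -
  have phic: "continuous_on {0..1} \<phi>" and phi1: "\<And>t. t \<ge> 1 \<Longrightarrow> \<phi> t = 0"
    using phi_facts[OF smooth supp] by auto
  have "bounded (\<phi> ` {0..1})"
    by (rule compact_imp_bounded, rule compact_continuous_image[OF phic]) simp
  then obtain \<Phi> where Phi: "\<And>t. t \<in> {0..1} \<Longrightarrow> \<bar>\<phi> t\<bar> \<le> \<Phi>"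
    unfolding bounded_real by blast
  have Phi0: "0 \<le> \<Phi>" using Phi[of 0] by simp
  define R :: "nat \<Rightarrow> real \<Rightarrow> 'a \<Rightarrow> real \<Rightarrow> 'a \<Rightarrow> complex" where
    "R = (\<lambda>n \<xi> \<eta> \<xi>' \<eta>'. if norm \<eta> \<le> real n \<and> norm \<eta>' \<le> real n
            then LHS \<phi> n \<xi> \<eta> \<xi>' \<eta>' - M \<phi> n \<xi> \<eta> \<xi>' \<eta>' else 0)"
  have bnd: "norm (R n \<xi> \<eta> \<xi>' \<eta>') \<le>
             \<Phi> / (norm \<eta> * norm \<eta>') *
               (1 / (rpow \<bar>\<xi> - norm \<eta>\<bar> \<kappa> * \<bar>\<xi>' + norm \<eta>'\<bar>)
                + 1 / (\<bar>\<xi> + norm \<eta>\<bar> * \<bar>\<xi>' + norm \<eta>'\<bar>)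
                + 1 / (\<bar>\<xi> + norm \<eta>\<bar> * rpow \<bar>\<xi>' - norm \<eta>'\<bar> \<kappa>))"
    if kap: "0 \<le> \<kappa>" "\<kappa> \<le> 1" and xi: "0 \<le> \<xi>" "0 \<le> \<xi>'" and eta: "\<eta> \<noteq> 0" "\<eta>' \<noteq> 0"
      and rk1: "rpow \<bar>\<xi> - norm \<eta>\<bar> \<kappa> \<noteq> 0" and rk2: "rpow \<bar>\<xi>' - norm \<eta>'\<bar> \<kappa> \<noteq> 0"
    for n \<xi> \<eta> \<xi>' \<eta>' \<kappa>
  proof (cases "norm \<eta> \<le> real n \<and> norm \<eta>' \<le> real n")
    case True
    then show ?thesis unfolding R_def
      using main_est[OF phic phi1 Phi xi eta _ _ kap rk1 rk2] by simp
  next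
    case False
    have "0 \<le> \<Phi> / (norm \<eta> * norm \<eta>') *
               (1 / (rpow \<bar>\<xi> - norm \<eta>\<bar> \<kappa> * \<bar>\<xi>' + norm \<eta>'\<bar>)
                + 1 / (\<bar>\<xi> + norm \<eta>\<bar> * \<bar>\<xi>' + norm \<eta>'\<bar>)
                + 1 / (\<bar>\<xi> + norm \<eta>\<bar> * rpow \<bar>\<xi>' - norm \<eta>'\<bar> \<kappa>))"
      using Phi0 by (intro mult_nonneg_nonneg add_nonneg_nonneg divide_nonneg_nonneg
          rpow_nonneg abs_ge_zero zero_le_one) auto
    moreover have "R n \<xi> \<eta> \<xi>' \<eta>' = 0" using False unfolding R_def by auto
    ultimately show ?thesis by simp
  qed
  show ?thesis
  proof (rule exI[of _ R], rule conjI)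
    show "\<forall>n \<xi> \<eta> \<xi>' \<eta>'. n \<ge> 1 \<longrightarrow> \<xi> \<ge> 0 \<longrightarrow> \<xi>' \<ge> 0 \<longrightarrow> \<eta> \<noteq> 0 \<longrightarrow> \<eta>' \<noteq> 0 \<longrightarrow>
        LHS \<phi> n \<xi> \<eta> \<xi>' \<eta>' =
          ind_le n \<eta> * ind_le n \<eta>' * (M \<phi> n \<xi> \<eta> \<xi>' \<eta>' + R n \<xi> \<eta> \<xi>' \<eta>')"
      unfolding R_def using eqn_part by blast
  next
    show "\<forall>\<kappa>::real. 0 \<le> \<kappa> \<and> \<kappa> \<le> 1 \<longrightarrow>
        (\<exists>C::real. \<forall>n \<xi> \<eta> \<xi>' \<eta>'. n \<ge> 1 \<longrightarrow> \<xi> \<ge> 0 \<longrightarrow> \<xi>' \<ge> 0 \<longrightarrow> \<eta> \<noteq> 0 \<longrightarrow> \<eta>' \<noteq> 0 \<longrightarrow>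
           rpow \<bar>\<xi> - norm \<eta>\<bar> \<kappa> \<noteq> 0 \<longrightarrow> rpow \<bar>\<xi>' - norm \<eta>'\<bar> \<kappa> \<noteq> 0 \<longrightarrow>
           norm (R n \<xi> \<eta> \<xi>' \<eta>') \<le>
             C / (norm \<eta> * norm \<eta>') *
               (1 / (rpow \<bar>\<xi> - norm \<eta>\<bar> \<kappa> * \<bar>\<xi>' + norm \<eta>'\<bar>)
                + 1 / (\<bar>\<xi> + norm \<eta>\<bar> * \<bar>\<xi>' + norm \<eta>'\<bar>)
                + 1 / (\<bar>\<xi> + norm \<eta>\<bar> * rpow \<bar>\<xi>' - norm \<eta>'\<bar> \<kappa>)))"
      using bnd by blast
  qed
qed

end
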